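(* Let $n$ be even and fix $\ell,D>0$. Let $\mathcal A$ be a first-order $p$-SCLI and let $z^{(t)}$ denote its iterates. Then there are constants $c_{\mathcal A},T_{\mathcal A}>0$ such that for every $T\ge T_{\mathcal A}$ there exist $F\in\mathcal F^{\mathrm{bil}}_{n,\ell,D}$, initial points $z^{(0)},z^{(-1)},\dots,z^{(-p+1)}\in\mathcal D_D$ and $T'\in\{T,T+1,\dots,T+p-1\}$ such that the iterates of $\mathcal A$ run on $F$ from this initialization satisfy $$\mathrm{Gap}_F^{\mathcal D_{2D}}(z^{(T')})\ge\frac{c_{\mathcal A}\,\ell D^2}{\sqrt T}.$$
   Context: A first-order $p$-SCLI is specified by fixed real scalars $\alpha_0,\dots,\alpha_{p-1},\beta_0,\dots,\beta_{p-1}$: given an operator $F:\mathbb R^n\to\mathbb R^n$ and initial points $z^{(0)},z^{(-1)},\dots,z^{(-p+1)}\in\mathbb R^n$, it generates $z^{(t)}=\sum_{j=0}^{p-1}\big(\alpha_jF(z^{(t-p+j)})+\beta_jz^{(t-p+j)}\big)$ for $t=1,2,\dots$. Write $z=(x,y)$ with $x,y\in\mathbb R^{n/2}$. For $R>0$, $\mathcal D_R:=\{x:\|x\|\le R\}\times\{y:\|y\|\le R\}\subset\mathbb R^{n/2}\times\mathbb R^{n/2}$. $\mathcal F^{\mathrm{bil}}_{n,\ell,D}$ is the set of $\ell$-Lipschitz operators $F:\mathbb R^n\to\mathbb R^n$ of the form $F(x,y)=(\nabla_xf(x,y),-\nabla_yf(x,y))$ where $f(x,y)=x^\top My+b_1^\top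 x+b_2^\top y$ for some $M\in\mathbb R^{(n/2)\times(n/2)}$, $b_1,b_2\in\mathbb R^{n/2}$, such that $F$ has a unique zero $z^*$ and $z^*\in\mathcal D_D$. For such $F$ (coming from $f$), $\mathrm{Gap}_F^{\mathcal D_{2D}}(x,y):=\max_{\|y'\|\le 2D}f(x,y')-\min_{\|x'\|\le 2D}f(x',y)$ (the total gap of the two-player zero-sum game with costs $f$ and $-f$). *)

theory Defs
  imports "HOL-Analysis.Analysis"
begin

text \<open>Points of R^n with n = 2 * CARD('m) are pairs (x,y) of vectors in R^(n/2) = real^'m;
  the product norm is the Euclidean norm of R^n.\<close>

type_synonym 'm pt = "(real^'m) \<times> (real^'m)"

definition domD :: "real \<Rightarrow> 'm::finite pt set" where
  "domD R = {(x, y). norm x \<le> R \<and> norm y \<le> R}"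

definition bil_f :: "real^'m^'m \<Rightarrow> real^'m \<Rightarrow> real^'m \<Rightarrow> real^'m \<Rightarrow> real^'m \<Rightarrow> real" where
  "bil_f M b1 b2 x y = x \<bullet> (M *v y) + b1 \<bullet> x + b2 \<bullet> y"

text \<open>F(x,y) = (grad_x f, - grad_y f) = (M y + b1, -(M^T x + b2)).\<close>
definition bil_F :: "real^'m^'m \<Rightarrow> real^'m \<Rightarrow> real^'m \<Rightarrow> 'm::finite pt \<Rightarrow> 'm pt" where
  "bil_F M b1 b2 z = (M *v snd z + b1, - (transpose M *v fst z + b2))"

definition bil_gap :: "real^'m^'m \<Rightarrow> real^'m \<Rightarrow> real^'m \<Rightarrow> real \<Rightarrow> 'm::finite pt \<Rightarrow> real" where
  "bil_gap M b1 b2 R z =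
     (SUP y'\<in>cball 0 R. bil_f M b1 b2 (fst z) y') - (INF x'\<in>cball 0 R. bil_f M b1 b2 x' (snd z))"

definition in_Fbil :: "real \<Rightarrow> real \<Rightarrow> real^'m^'m \<Rightarrow> real^'m \<Rightarrow> real^'m \<Rightarrow> ('m::finite pt \<Rightarrow> 'm pt) \<Rightarrow> bool" where
  "in_Fbil l D M b1 b2 F \<longleftrightarrow>
     F = bil_F M b1 b2 \<and> l-lipschitz_on UNIV F \<and>
     (\<exists>!z. F z = 0) \<and> (\<forall>z. F z = 0 \<longrightarrow> z \<in> domD D)"

text \<open>p-SCLI iterates. scli_win al be p F z0 t i = z^(t + i - p + 1) for i < p,
  where the initial points are z^(-k) = z0 k for k < p. Recurrence:
  z^(t) = sum_{j<p} (al j F(z^(t-p+j)) + be j z^(t-p+j)).\<close>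
primrec scli_win :: "(nat \<Rightarrow> real) \<Rightarrow> (nat \<Rightarrow> real) \<Rightarrow> nat \<Rightarrow> ('v::real_vector \<Rightarrow> 'v)
    \<Rightarrow> (nat \<Rightarrow> 'v) \<Rightarrow> nat \<Rightarrow> nat \<Rightarrow> 'v" where
  "scli_win al be p F z0 0 = (\<lambda>i. z0 (p - 1 - i))"
| "scli_win al be p F z0 (Suc t) = (\<lambda>i. if i < p - 1 then scli_win al be p F z0 t (Suc i)
      else (\<Sum>j<p. al j *\<^sub>R F (scli_win al be p F z0 t j) + be j *\<^sub>R scli_win al be p F z0 t j))"

definition scli_iter :: "(nat \<Rightarrow> real) \<Rightarrow> (nat \<Rightarrow> real) \<Rightarrow> nat \<Rightarrow> ('v::real_vector \<Rightarrow> 'v)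
    \<Rightarrow> (nat \<Rightarrow> 'v) \<Rightarrow> nat \<Rightarrow> 'v" where
  "scli_iter al be p F z0 t = scli_win al be p F z0 t (p - 1)"

end

theory Submission
  imports Defs "HOL-Computational_Algebra.Fundamental_Theorem_Algebra"
begin


lemma pderiv_lin: "pderiv [:-(r::complex), 1:] = 1"
  by (simp add: pderiv_pCons)

lemma pderiv_sum: "pderiv (sum f A) = (\<Sum>a\<in>A. pderiv (f a))"
  by (induction A rule: infinite_finite_induct) (simp_all add: pderiv_add)

lemma root_ids:
  fixes r :: "nat \<Rightarrow> complex" and p :: nat
  defines "P \<equiv> (\<Prod>i<p. [:-r i, 1:])"
  assumes nz: "\<And>i. i < p \<Longrightarrow> r i \<noteq> 1"
  shows "poly P 1 = (\<Prod>i<p. 1 - r i)"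
    and "poly (pderiv P) 1 = poly P 1 * (\<Sum>i<p. 1 / (1 - r i))"
    and "poly (pderiv (pderiv P)) 1 = poly P 1 * (\<Sum>i<p. \<Sum>j\<in>{..<p}-{i}. 1/(1 - r i) * (1 / (1 - r j)))"
proof -
  define g where "g i = 1 - r i" for i
  have gnz: "i < p \<Longrightarrow> g i \<noteq> 0" for i using nz[of i] by (auto simp: g_def)
  have pf: "poly (\<Prod>i\<in>B. [:-r i, 1:]) 1 = prod g B" for B
    by (simp add: poly_prod g_def)
  show "poly P 1 = (\<Prod>i<p. 1 - r i)" by (simp add: P_def pf g_def)
  have d1: "pderiv (\<Prod>i\<in>B. [:-r i, 1:]) = (\<Sum>i\<in>B. \<Prod>j\<in>B-{i}. [:-r j, 1:])" for B
    by (simp add: pderiv_prod pderiv_lin)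
  have pd: "prod g (B - {i}) = prod g B / g i" if "finite B" "i \<in> B" "g i \<noteq> 0" for B i
    using prod_diff1[of B g i] that by simp
  have "poly (pderiv P) 1 = (\<Sum>i<p. prod g ({..<p} - {i}))"
    by (simp add: P_def d1 poly_sum pf)
  also have "\<dots> = (\<Sum>i<p. prod g {..<p} / g i)"
    by (rule sum.cong) (auto intro!: pd gnz)
  also have "\<dots> = poly P 1 * (\<Sum>i<p. 1 / (1 - r i))"
    by (simp add: P_def pf sum_distrib_left g_def divide_inverse)
  finally show "poly (pderiv P) 1 = poly P 1 * (\<Sum>i<p. 1 / (1 - r i))" .
  have "poly (pderiv (pderiv P)) 1 = (\<Sum>i<p. \<Sum>j\<in>{..<p}-{i}. prod g ({..<p} - {i} - {j}))"
    by (simp add: P_def d1 pderiv_sum poly_sum pf)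
  also have "\<dots> = (\<Sum>i<p. \<Sum>j\<in>{..<p}-{i}. prod g {..<p} / g i / g j)"
    by (intro sum.cong refl) (auto simp: pd gnz)
  also have "\<dots> = poly P 1 * (\<Sum>i<p. \<Sum>j\<in>{..<p}-{i}. 1/(1 - r i) * (1 / (1 - r j)))"
    by (simp add: P_def pf sum_distrib_left g_def divide_inverse mult_ac)
  finally show "poly (pderiv (pderiv P)) 1 = poly P 1 * (\<Sum>i<p. \<Sum>j\<in>{..<p}-{i}. 1/(1 - r i) * (1 / (1 - r j)))" .
qed



definition cc :: "(nat\<Rightarrow>real) \<Rightarrow> (nat\<Rightarrow>real) \<Rightarrow> real \<Rightarrow> nat \<Rightarrow> complex" where
  "cc al be \<mu> j = complex_of_real (be j) - \<i> * complex_of_real (\<mu> * al j)"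

definition cP :: "(nat\<Rightarrow>real) \<Rightarrow> (nat\<Rightarrow>real) \<Rightarrow> nat \<Rightarrow> real \<Rightarrow> complex poly" where
  "cP al be p \<mu> = monom 1 p - (\<Sum>j<p. monom (cc al be \<mu> j) j)"

lemma poly_cP: "poly (cP al be p \<mu>) z = z ^ p - (\<Sum>j<p. cc al be \<mu> j * z ^ j)"
  by (simp add: cP_def poly_monom poly_sum)

lemma coeff_cP: "coeff (cP al be p \<mu>) n = (if n = p then 1 else 0) - (if n < p then cc al be \<mu> n else 0)"
proof -
  have "(\<Sum>j<p. coeff (monom (cc al be \<mu> j) j) n) = (\<Sum>j<p. if j = n then cc al be \<mu> j else 0)"
    by (intro sum.cong) (auto simp: coeff_monom)
  also have "\<dots> = (if n < p then cc al be \<mu> n else 0)"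
    by (simp add: sum.delta)
  finally show ?thesis by (simp add: cP_def coeff_sum coeff_monom)
qed

lemma degree_cP: "degree (cP al be p \<mu>) = p" and lead_cP: "lead_coeff (cP al be p \<mu>) = 1"
proof -
  have "degree (cP al be p \<mu>) \<le> p"
    by (rule degree_le) (auto simp: coeff_cP)
  moreover have "coeff (cP al be p \<mu>) p \<noteq> 0" by (simp add: coeff_cP)
  hence "p \<le> degree (cP al be p \<mu>)" by (rule le_degree)
  ultimately show d: "degree (cP al be p \<mu>) = p" by simp
  show "lead_coeff (cP al be p \<mu>) = 1" by (simp add: d coeff_cP)
qed

lemma pderiv_cP1: "poly (pderiv (cP al be p \<mu>)) 1 = of_nat p - (\<Sum>j<p. of_nat j * cc al be \<mu> j)"
  by (simp add: cP_def pderiv_diff pderiv_sum pderiv_monom poly_sum poly_monom)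

lemma pderiv2_cP1: "poly (pderiv (pderiv (cP al be p \<mu>))) 1 =
   of_nat (p - 1) * of_nat p - (\<Sum>j<p. of_nat (j - 1) * (of_nat j * cc al be \<mu> j))"
  by (simp add: cP_def pderiv_diff pderiv_sum pderiv_monom poly_sum poly_monom)

lemma cP_factor:
  obtains r where "cP al be p \<mu> = (\<Prod>i<p. [:-r i, 1:])"
  using complex_poly_decompose'[of "cP al be p \<mu>"] by (metis degree_cP lead_cP smult_1_left)



lemma re_u:
  fixes r :: complex assumes "cmod r < 1"
  shows "Re (1/(1-r)) = 1/2 + (1 - cmod r ^ 2) * cmod (1/(1-r)) ^ 2 / 2"
proof -
  have ne: "1 - r \<noteq> 0" using assms by auto
  have den: "(1 - Re r)^2 + (Im r)^2 \<noteq> 0"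
  proof
    assume "(1 - Re r)^2 + (Im r)^2 = 0"
    hence "Re r = 1" "Im r = 0" by (auto simp: add_nonneg_eq_0_iff)
    hence "r = 1" by (simp add: complex_eq_iff)
    thus False using ne by simp
  qed
  have e1: "cmod (1/(1-r)) ^ 2 = 1 / ((1 - Re r)^2 + (Im r)^2)"
    by (simp add: norm_divide power_divide cmod_power2)
  have e2: "Re (1/(1-r)) = (1 - Re r) / ((1 - Re r)^2 + (Im r)^2)"
    by (simp add: Re_divide)
  have e3: "cmod r ^ 2 = (Re r)^2 + (Im r)^2" by (simp add: cmod_power2)
  have gen: "(1 - X) / ((1 - X)^2 + Y^2) = 1/2 + (1 - (X^2 + Y^2)) * (1 / ((1 - X)^2 + Y^2)) / 2"
    if "(1 - X)^2 + Y^2 \<noteq> 0" for X Y :: real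
  proof -
    define N where "N = (1 - X)^2 + Y^2"
    have N: "N \<noteq> 0" using that by (simp add: N_def)
    have a: "N + 1 - (X^2 + Y^2) = 2 * (1 - X)" by (simp add: N_def power2_eq_square algebra_simps)
    have "1/2 + (1 - (X^2 + Y^2)) * (1 / N) / 2 = (N + 1 - (X^2 + Y^2)) / (2 * N)"
      using N by (simp add: field_simps)
    also have "\<dots> = 2 * (1 - X) / (2 * N)" by (simp only: a)
    also have "\<dots> = (1 - X) / N" by (rule mult_divide_mult_cancel_left) simp
    finally show ?thesis by (simp add: N_def)
  qed
  show ?thesis unfolding e1 e2 e3 using gen[OF den] .
qed

lemma re_u_pos: fixes r :: complex assumes "cmod r < 1" shows "Re (1/(1-r)) > 0"
proof -
  have "0 \<le> (1 - cmod r ^ 2) * cmod (1/(1-r)) ^ 2 / 2"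
    using assms by (intro divide_nonneg_pos mult_nonneg_nonneg) (auto simp: power_le_one)
  thus ?thesis using re_u[OF assms] by linarith
qed



lemma case_dnz:
  fixes r :: "nat \<Rightarrow> complex" and p :: nat and \<mu> a a' d :: real
  assumes p1: "p \<ge> 1" and allin: "\<forall>i<p. cmod (r i) < 1"
    and S1: "(\<Sum>i<p. 1/(1 - r i)) = complex_of_real (a'/a) - \<i> * complex_of_real (d/(\<mu>*a))"
    and mu: "\<mu> > 0" and a: "a \<noteq> 0" and d: "d \<noteq> 0"
  shows "\<exists>i<p. 1 - (2 * real p ^ 2 * a ^ 2 * \<bar>a'/a\<bar> / d ^ 2 + 1) * \<mu> ^ 2 \<le> cmod (r i) ^ 2"
proof -
  define u where "u i = 1/(1 - r i)" for i
  define S where "S = (\<Sum>i<p. u i)"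
  have ReS: "Re S = a'/a" and ImS: "Im S = - (d/(\<mu>*a))" using S1 by (simp_all add: S_def u_def)
  have cS: "cmod S \<ge> \<bar>d\<bar>/(\<mu>*\<bar>a\<bar>)"
    using abs_Im_le_cmod[of S] ImS mu by (simp add: abs_mult)
  have "\<exists>k<p. cmod (u k) \<ge> cmod S / p"
  proof (rule ccontr)
    assume "\<not> ?thesis"
    hence lt: "\<And>k. k \<in> {..<p} \<Longrightarrow> cmod (u k) < cmod S / p" by auto
    have "cmod S \<le> (\<Sum>i<p. cmod (u i))" unfolding S_def by (rule norm_sum)
    also have "\<dots> < (\<Sum>i<p. cmod S / p)"
      by (rule sum_strict_mono) (use p1 lt in \<open>auto simp: lessThan_empty_iff\<close>)
    also have "\<dots> = cmod S" using p1 by simp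
    finally show False by simp
  qed
  then obtain k where k: "k < p" "cmod (u k) \<ge> cmod S / p" by auto
  have pos: "Re (u i) > 0" if "i < p" for i using re_u_pos allin that by (simp add: u_def)
  have "Re (u k) \<le> (\<Sum>i<p. Re (u i))"
    by (rule member_le_sum) (use k pos in \<open>auto intro: less_imp_le\<close>)
  also have "\<dots> = a'/a" using ReS by (simp add: S_def)
  finally have Rk: "Re (u k) \<le> a'/a" .
  have Rk2: "Re (u k) = 1/2 + (1 - cmod (r k) ^ 2) * cmod (u k) ^ 2 / 2"
    using re_u allin k by (simp add: u_def)
  define t where "t = 1 - cmod (r k) ^ 2"
  define U where "U = cmod (u k) ^ 2"
  define L where "L = d^2 / (\<mu>^2 * a^2 * real p ^ 2)"
  have Lpos: "L > 0" using d a mu p1 by (simp add: L_def)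
  have "\<bar>d\<bar>/(\<mu>*\<bar>a\<bar>) / p \<le> cmod S / p" using cS p1 by (intro divide_right_mono) auto
  hence "\<bar>d\<bar>/(\<mu>*\<bar>a\<bar>) / p \<le> cmod (u k)" using k by linarith
  hence "(\<bar>d\<bar>/(\<mu>*\<bar>a\<bar>) / p)^2 \<le> cmod (u k) ^ 2"
    by (rule power_mono) (use mu p1 in auto)
  hence UL: "L \<le> U" by (simp add: L_def U_def power_divide power_mult_distrib)
  have tU: "t * U \<le> 2 * (a'/a)" using Rk Rk2 by (simp add: t_def U_def)
  show ?thesis
  proof (cases "t \<le> 0")
    case True
    hence "1 \<le> cmod (r k) ^ 2" by (simp add: t_def)
    moreover have "0 \<le> (2 * real p ^ 2 * a ^ 2 * \<bar>a'/a\<bar> / d ^ 2 + 1) * \<mu> ^ 2" by simp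
    ultimately have "1 - (2 * real p ^ 2 * a ^ 2 * \<bar>a'/a\<bar> / d ^ 2 + 1) * \<mu> ^ 2 \<le> cmod (r k) ^ 2"
      by linarith
    thus ?thesis using k by blast
  next
    case False
    hence "t * L \<le> t * U" using UL by (intro mult_left_mono) auto
    hence "t * L \<le> 2 * \<bar>a'/a\<bar>" using tU by linarith
    hence "t \<le> 2 * \<bar>a'/a\<bar> / L" by (simp only: pos_le_divide_eq[OF Lpos])
    also have "\<dots> = 2 * real p ^ 2 * a ^ 2 * \<bar>a'/a\<bar> / d ^ 2 * \<mu>^2"
      using d a mu p1 by (simp add: L_def field_simps)
    also have "\<dots> \<le> (2 * real p ^ 2 * a ^ 2 * \<bar>a'/a\<bar> / d ^ 2 + 1) * \<mu> ^ 2"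
      by (simp add: algebra_simps)
    finally show ?thesis using k by (intro exI[of _ k]) (auto simp: t_def)
  qed
qed



lemma case_d0:
  fixes r :: "nat \<Rightarrow> complex" and p :: nat and \<mu> a \<sigma> A2 :: real
  assumes p1: "p \<ge> 1" and allin: "\<forall>i<p. cmod (r i) < 1"
    and S1: "(\<Sum>i<p. 1/(1 - r i)) = complex_of_real \<sigma>"
    and S2: "Re (\<Sum>i<p. \<Sum>j\<in>{..<p}-{i}. 1/(1 - r i) * (1/(1 - r j))) = A2/a"
    and P1: "(\<Prod>i<p. 1 - r i) = \<i> * complex_of_real (\<mu>*a)"
  shows "1 \<le> (\<mu> * a)^2 * ((real p + 1) * \<sigma>^2 + \<bar>A2/a\<bar>) ^ p"
proof -
  define u where "u i = 1/(1 - r i)" for i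
  define K where "K = (real p + 1) * \<sigma>^2 + \<bar>A2/a\<bar>"
  have pos: "Re (u i) > 0" if "i < p" for i using re_u_pos allin that by (simp add: u_def)
  have sumx: "(\<Sum>i<p. Re (u i)) = \<sigma>" using arg_cong[OF S1, of Re] by (simp add: u_def)
  have xle: "Re (u i) \<le> \<sigma>" if "i < p" for i
  proof -
    have "Re (u i) \<le> (\<Sum>i<p. Re (u i))"
      by (rule member_le_sum) (use that pos in \<open>auto intro: less_imp_le\<close>)
    thus ?thesis using sumx by simp
  qed
  have x2: "Re (u i) ^ 2 \<le> \<sigma>^2" if "i < p" for i
    using pos[OF that] xle[OF that] by (intro power_mono) auto
  have dd: "(\<Sum>i<p. \<Sum>j\<in>{..<p}-{i}. u i * u j) = (\<Sum>i<p. u i)^2 - (\<Sum>i<p. u i ^ 2)"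
  proof -
    have "(\<Sum>i<p. \<Sum>j\<in>{..<p}-{i}. u i * u j) = (\<Sum>i<p. u i * ((\<Sum>j<p. u j) - u i))"
      by (intro sum.cong refl) (simp add: sum_distrib_left[symmetric] sum_diff1)
    also have "\<dots> = (\<Sum>i<p. u i)^2 - (\<Sum>i<p. u i ^ 2)"
      by (simp add: algebra_simps sum_subtractf power2_eq_square sum_distrib_left sum_distrib_right)
    finally show ?thesis .
  qed
  have "Re (\<Sum>i<p. u i ^ 2) = \<sigma>^2 - A2/a"
    using arg_cong[OF dd, of Re] S2 S1 by (simp add: u_def power2_eq_square)
  hence "(\<Sum>i<p. Re (u i)^2 - Im (u i)^2) = \<sigma>^2 - A2/a"
    by (simp add: Re_sum power2_eq_square)
  hence sy: "(\<Sum>i<p. Im (u i)^2) = (\<Sum>i<p. Re (u i)^2) - \<sigma>^2 + A2/a"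
    by (simp add: sum_subtractf)
  have "(\<Sum>i<p. Re (u i)^2) \<le> (\<Sum>i<p. \<sigma>^2)" by (rule sum_mono) (simp add: x2)
  moreover have "A2/a \<le> \<bar>A2/a\<bar>" by (rule abs_ge_self)
  moreover have "0 \<le> \<sigma>^2" by simp
  ultimately have sy2: "(\<Sum>i<p. Im (u i)^2) \<le> real p * \<sigma>^2 + \<bar>A2/a\<bar>" using sy
    by (simp only: sum_constant card_lessThan)
  have ub: "cmod (u i) ^ 2 \<le> K" if "i < p" for i
  proof -
    have "Im (u i)^2 \<le> (\<Sum>i<p. Im (u i)^2)"
      by (rule member_le_sum) (use that in auto)
    thus ?thesis using x2[OF that] sy2 by (simp add: cmod_power2 K_def algebra_simps)
  qed
  have "(\<Prod>i<p. cmod (u i) ^ 2) \<le> (\<Prod>i<p. K)"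
    by (rule prod_mono) (simp add: ub)
  also have "\<dots> = K ^ p" by simp
  finally have pk: "(\<Prod>i<p. cmod (u i) ^ 2) \<le> K ^ p" .
  have "(\<Prod>i<p. cmod (u i) ^ 2) = cmod (\<Prod>i<p. u i) ^ 2"
    by (simp add: prod_norm[symmetric] prod_power_distrib)
  also have "(\<Prod>i<p. u i) = 1 / (\<Prod>i<p. 1 - r i)"
    by (simp add: u_def prod_dividef)
  also have "cmod (1 / (\<Prod>i<p. 1 - r i)) ^ 2 = 1 / (\<mu> * a)^2"
    using P1 by (simp add: norm_divide power_divide norm_mult power_mult_distrib)
  finally have fin: "1 / (\<mu> * a)^2 \<le> K ^ p" using pk by simp
  show ?thesis
  proof (cases "(\<mu> * a)^2 = 0")
    case False
    hence "(\<mu> * a)^2 > 0" by simp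
    thus ?thesis using fin by (simp add: K_def divide_le_eq mult.commute)
  next
    case True
    hence "(\<Prod>i<p. 1 - r i) = 0" using P1 by simp
    then obtain i where "i < p" "r i = 1" by auto
    thus ?thesis using allin by auto
  qed
qed



lemma sum_cc: "(\<Sum>j<p. complex_of_real (w j) * cc al be \<mu> j) =
   complex_of_real (\<Sum>j<p. w j * be j) - \<i> * complex_of_real (\<mu> * (\<Sum>j<p. w j * al j))"
  by (simp add: cc_def sum_subtractf sum_distrib_left algebra_simps)

lemma div_i:
  fixes m a b d :: real assumes "m \<noteq> 0" "a \<noteq> 0"
  shows "(complex_of_real d + \<i> * complex_of_real (m * b)) / (\<i> * complex_of_real (m * a)) =
     complex_of_real (b/a) - \<i> * complex_of_real (d/(m*a))"
proof -
  have nz: "\<i> * complex_of_real (m * a) \<noteq> 0" using assms by simp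
  show ?thesis
    using assms by (subst divide_eq_eq) (simp add: complex_eq_iff field_simps)
qed

lemma roots_info:
  fixes al be :: "nat \<Rightarrow> real" and p :: nat and \<mu> :: real
  defines "a \<equiv> (\<Sum>j<p. al j)" and "a' \<equiv> (\<Sum>j<p. real j * al j)"
    and "d \<equiv> real p - (\<Sum>j<p. real j * be j)"
    and "A2 \<equiv> (\<Sum>j<p. real (j - 1) * real j * al j)"
  assumes p1: "p \<ge> 1" and s1: "(\<Sum>j<p. be j) = 1" and mu: "\<mu> > 0" and anz: "a \<noteq> 0"
  shows "(\<exists>z. poly (cP al be p \<mu>) z = 0 \<and> 1 \<le> cmod z ^ 2) \<or>
    (\<exists>r. (\<forall>i<p. cmod (r i) < 1) \<and> (\<forall>i<p. poly (cP al be p \<mu>) (r i) = 0) \<and>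
       (\<Sum>i<p. 1/(1 - r i)) = complex_of_real (a'/a) - \<i> * complex_of_real (d/(\<mu>*a)) \<and>
       Re (\<Sum>i<p. \<Sum>j\<in>{..<p}-{i}. 1/(1 - r i) * (1/(1 - r j))) = A2/a \<and>
       (\<Prod>i<p. 1 - r i) = \<i> * complex_of_real (\<mu>*a))"
proof -
  define Q2 where "Q2 = real (p - 1) * real p - (\<Sum>j<p. real (j - 1) * real j * be j)"
  have P1: "poly (cP al be p \<mu>) 1 = \<i> * complex_of_real (\<mu> * a)"
    using sum_cc[where w="\<lambda>_. 1" and p=p and al=al and be=be and \<mu>=\<mu>] s1 by (simp add: poly_cP a_def)
  have P1': "poly (pderiv (cP al be p \<mu>)) 1 = complex_of_real d + \<i> * complex_of_real (\<mu> * a')"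
    using sum_cc[where w="\<lambda>j. real j" and p=p and al=al and be=be and \<mu>=\<mu>] by (simp add: pderiv_cP1 a'_def d_def)
  have P2: "poly (pderiv (pderiv (cP al be p \<mu>))) 1 = complex_of_real Q2 + \<i> * complex_of_real (\<mu> * A2)"
    using sum_cc[where w="\<lambda>j. real (j - 1) * real j" and p=p and al=al and be=be and \<mu>=\<mu>]
    by (simp add: pderiv2_cP1 A2_def Q2_def mult.assoc)
  obtain r where fac: "cP al be p \<mu> = (\<Prod>i<p. [:-r i, 1:])" by (rule cP_factor)
  have roots: "poly (cP al be p \<mu>) (r i) = 0" if "i < p" for i
    using that by (simp add: fac poly_prod) (auto intro!: bexI[of _ i])
  show ?thesis
  proof (cases "\<exists>i<p. 1 \<le> cmod (r i)")
    case True
    then obtain i where "i < p" "1 \<le> cmod (r i)" by auto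
    hence "1 \<le> cmod (r i) ^ 2" by (simp add: one_le_power)
    thus ?thesis using roots \<open>i < p\<close> by blast
  next
    case False
    hence allin: "\<forall>i<p. cmod (r i) < 1" by auto
    hence ne1: "\<And>i. i < p \<Longrightarrow> r i \<noteq> 1" by fastforce
    note ids = root_ids[of p r, OF ne1, folded fac]
    have Pr: "(\<Prod>i<p. 1 - r i) = \<i> * complex_of_real (\<mu>*a)" using ids(1) P1 by simp
    have Pnz: "poly (cP al be p \<mu>) 1 \<noteq> 0" using P1 mu anz by simp
    have "(\<Sum>i<p. 1/(1 - r i)) = poly (pderiv (cP al be p \<mu>)) 1 / poly (cP al be p \<mu>) 1"
      using ids(2) Pnz by simp
    also have "\<dots> = complex_of_real (a'/a) - \<i> * complex_of_real (d/(\<mu>*a))"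
      using mu anz unfolding P1 P1' by (intro div_i) auto
    finally have S1: "(\<Sum>i<p. 1/(1 - r i)) = complex_of_real (a'/a) - \<i> * complex_of_real (d/(\<mu>*a))" .
    have "(\<Sum>i<p. \<Sum>j\<in>{..<p}-{i}. 1/(1 - r i) * (1/(1 - r j))) =
        poly (pderiv (pderiv (cP al be p \<mu>))) 1 / poly (cP al be p \<mu>) 1"
      using ids(3) Pnz by simp
    also have "\<dots> = complex_of_real (A2/a) - \<i> * complex_of_real (Q2/(\<mu>*a))"
      using mu anz unfolding P1 P2 by (intro div_i) auto
    finally have S2: "Re (\<Sum>i<p. \<Sum>j\<in>{..<p}-{i}. 1/(1 - r i) * (1/(1 - r j))) = A2/a" by simp
    show ?thesis using allin roots S1 S2 Pr by blast
  qed
qed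



lemma hard:
  fixes al be :: "nat \<Rightarrow> real" and p :: nat
  assumes p1: "p \<ge> 1" and s1: "(\<Sum>j<p. be j) = 1"
  shows "\<exists>C>0. \<exists>\<mu>0>0. \<forall>\<mu>. 0 < \<mu> \<and> \<mu> \<le> \<mu>0 \<longrightarrow>
           (\<exists>z. poly (cP al be p \<mu>) z = 0 \<and> 1 - C * \<mu>^2 \<le> cmod z ^ 2)"
proof -
  define a where "a = (\<Sum>j<p. al j)"
  define a' where "a' = (\<Sum>j<p. real j * al j)"
  define d where "d = real p - (\<Sum>j<p. real j * be j)"
  define A2 where "A2 = (\<Sum>j<p. real (j - 1) * real j * al j)"
  note RI = roots_info[OF p1 s1, of _ al, folded a_def a'_def d_def A2_def]
  show ?thesis
  proof (cases "a = 0")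
    case True
    have "poly (cP al be p \<mu>) 1 = 0" for \<mu>
      using sum_cc[where w="\<lambda>_. 1" and p=p and al=al and be=be and \<mu>=\<mu>] s1 True
      by (simp add: poly_cP a_def del: of_real_sum)
    hence "\<forall>\<mu>. 0 < \<mu> \<and> \<mu> \<le> 1 \<longrightarrow> (\<exists>z. poly (cP al be p \<mu>) z = 0 \<and> 1 - 1 * \<mu>^2 \<le> cmod z ^ 2)"
      by (intro allI impI exI[of _ 1]) auto
    hence "\<exists>\<mu>0>0. \<forall>\<mu>. 0 < \<mu> \<and> \<mu> \<le> \<mu>0 \<longrightarrow> (\<exists>z. poly (cP al be p \<mu>) z = 0 \<and> 1 - 1 * \<mu>^2 \<le> cmod z ^ 2)"
      by (intro exI[of _ "1::real"]) simp
    thus ?thesis by (intro exI[of _ "1::real"]) simp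
  next
    case anz: False
    show ?thesis
    proof (cases "d = 0")
      case False
      define C where "C = 2 * real p ^ 2 * a ^ 2 * \<bar>a'/a\<bar> / d ^ 2 + 1"
      have Cpos: "C > 0" unfolding C_def by (intro add_nonneg_pos) auto
      have "\<exists>z. poly (cP al be p \<mu>) z = 0 \<and> 1 - C * \<mu>^2 \<le> cmod z ^ 2" if mu: "0 < \<mu>" for \<mu>
      proof -
        from RI[OF mu anz] show ?thesis
        proof
          assume "\<exists>z. poly (cP al be p \<mu>) z = 0 \<and> 1 \<le> cmod z ^ 2"
          then obtain z where "poly (cP al be p \<mu>) z = 0" "1 \<le> cmod z ^ 2" by auto
          moreover have "0 \<le> C * \<mu>^2" using Cpos by simp
          ultimately show ?thesis by (intro exI[of _ z]) auto
        next
          assume "\<exists>r. (\<forall>i<p. cmod (r i) < 1) \<and> (\<forall>i<p. poly (cP al be p \<mu>) (r i) = 0) \<and>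
             (\<Sum>i<p. 1/(1 - r i)) = complex_of_real (a'/a) - \<i> * complex_of_real (d/(\<mu>*a)) \<and>
             Re (\<Sum>i<p. \<Sum>j\<in>{..<p}-{i}. 1/(1 - r i) * (1/(1 - r j))) = A2/a \<and>
             (\<Prod>i<p. 1 - r i) = \<i> * complex_of_real (\<mu>*a)"
          then obtain r where r: "\<forall>i<p. cmod (r i) < 1" "\<forall>i<p. poly (cP al be p \<mu>) (r i) = 0"
             "(\<Sum>i<p. 1/(1 - r i)) = complex_of_real (a'/a) - \<i> * complex_of_real (d/(\<mu>*a))"
            by blast
          from case_dnz[OF p1 r(1) r(3) mu anz False] obtain i where
            "i < p" "1 - C * \<mu> ^ 2 \<le> cmod (r i) ^ 2" unfolding C_def by blast
          thus ?thesis using r(2) by blast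
        qed
      qed
      thus ?thesis using Cpos by (intro exI[of _ C] conjI exI[of _ 1]) auto
    next
      case d0: True
      define \<sigma> where "\<sigma> = a'/a"
      define K where "K = (real p + 1) * \<sigma>^2 + \<bar>A2/a\<bar>"
      define B where "B = a^2 * (1 + K) ^ p"
      define \<mu>0 where "\<mu>0 = 1 / (B + 1)"
      have K0: "K \<ge> 0" unfolding K_def by simp
      have B0: "B \<ge> 0" unfolding B_def using K0 by simp
      have mu0: "\<mu>0 > 0" "\<mu>0 \<le> 1" using B0 by (auto simp: \<mu>0_def)
      have "\<exists>z. poly (cP al be p \<mu>) z = 0 \<and> 1 - 1 * \<mu>^2 \<le> cmod z ^ 2" if mu: "0 < \<mu>" "\<mu> \<le> \<mu>0" for \<mu>
      proof -
        from RI[OF mu(1) anz] show ?thesis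
        proof
          assume "\<exists>z. poly (cP al be p \<mu>) z = 0 \<and> 1 \<le> cmod z ^ 2"
          then obtain z where z: "poly (cP al be p \<mu>) z = 0" "1 \<le> cmod z ^ 2" by auto
          have "1 - 1 * \<mu>^2 \<le> cmod z ^ 2" using z(2) zero_le_power2[of \<mu>] by linarith
          thus ?thesis using z(1) by blast
        next
          assume "\<exists>r. (\<forall>i<p. cmod (r i) < 1) \<and> (\<forall>i<p. poly (cP al be p \<mu>) (r i) = 0) \<and>
             (\<Sum>i<p. 1/(1 - r i)) = complex_of_real (a'/a) - \<i> * complex_of_real (d/(\<mu>*a)) \<and>
             Re (\<Sum>i<p. \<Sum>j\<in>{..<p}-{i}. 1/(1 - r i) * (1/(1 - r j))) = A2/a \<and>
             (\<Prod>i<p. 1 - r i) = \<i> * complex_of_real (\<mu>*a)"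
          then obtain r where r: "\<forall>i<p. cmod (r i) < 1"
             "(\<Sum>i<p. 1/(1 - r i)) = complex_of_real \<sigma>"
             "Re (\<Sum>i<p. \<Sum>j\<in>{..<p}-{i}. 1/(1 - r i) * (1/(1 - r j))) = A2/a"
             "(\<Prod>i<p. 1 - r i) = \<i> * complex_of_real (\<mu>*a)"
            using d0 by (auto simp: \<sigma>_def)
          have big: "1 \<le> (\<mu> * a)^2 * K ^ p"
            using case_d0[OF p1 r(1) r(2) r(3) r(4)] by (simp add: K_def)
          have "K ^ p \<le> (1 + K) ^ p" using K0 by (intro power_mono) auto
          hence "(\<mu> * a)^2 * K ^ p \<le> \<mu>^2 * B"
            unfolding B_def power_mult_distrib mult.assoc by (intro mult_left_mono) auto
          also have "\<dots> \<le> \<mu> * B"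
            using mu mu0 B0 by (intro mult_right_mono) (auto simp: power2_eq_square mult_le_cancel_left1)
          also have "\<dots> \<le> \<mu>0 * B" using mu B0 by (intro mult_right_mono) auto
          also have "\<dots> < 1" using B0 by (simp add: \<mu>0_def)
          finally show ?thesis using big by simp
        qed
      qed
      thus ?thesis using mu0 by (intro exI[of _ 1] conjI exI[of _ \<mu>0]) auto
    qed
  qed
qed



lemma mat_mult_vec: "mat \<mu> *v (y::real^'m::finite) = \<mu> *\<^sub>R y"
proof -
  have "(\<Sum>j\<in>UNIV. (if i = j then \<mu> else 0) * y $ j) = \<mu> * y $ i" for i
  proof -
    have "(\<Sum>j\<in>UNIV. (if i = j then \<mu> else 0) * y $ j) = (\<Sum>j\<in>UNIV. if i = j then \<mu> * y $ j else 0)"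
      by (intro sum.cong) auto
    also have "\<dots> = \<mu> * y $ i" by (simp add: sum.delta)
    finally show ?thesis .
  qed
  thus ?thesis by (simp add: vec_eq_iff mat_def matrix_vector_mult_def)
qed

lemma bilF_eq:
  fixes xs ys :: "real^'m::finite"
  shows "bil_F (mat \<mu>) (-(\<mu> *\<^sub>R ys)) (-(\<mu> *\<^sub>R xs)) z = (\<mu> *\<^sub>R (snd z - ys), - (\<mu> *\<^sub>R (fst z - xs)))"
  by (simp add: bil_F_def mat_mult_vec algebra_simps)

lemma bilf_eq:
  fixes x y b1 b2 :: "real^'m::finite"
  shows "bil_f (mat \<mu>) b1 b2 x y = \<mu> * (x \<bullet> y) + b1 \<bullet> x + b2 \<bullet> y"
  by (simp add: bil_f_def mat_mult_vec)

lemma in_Fbil_I: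
  fixes xs ys :: "real^'m::finite"
  assumes mu: "0 < \<mu>" "\<mu> \<le> l" and xs: "norm xs \<le> D" and ys: "norm ys \<le> D"
  shows "in_Fbil l D (mat \<mu>) (-(\<mu> *\<^sub>R ys)) (-(\<mu> *\<^sub>R xs)) (bil_F (mat \<mu>) (-(\<mu> *\<^sub>R ys)) (-(\<mu> *\<^sub>R xs)))"
proof -
  let ?F = "bil_F (mat \<mu>) (-(\<mu> *\<^sub>R ys)) (-(\<mu> *\<^sub>R xs))"
  have zero: "?F z = 0 \<longleftrightarrow> z = (xs, ys)" for z
    using mu by (cases z) (auto simp: bilF_eq zero_prod_def)
  have lip: "l-lipschitz_on UNIV ?F"
  proof (rule lipschitz_onI)
    fix z w :: "'m pt"
    have sq: "sqrt (\<mu>^2 * B + \<mu>^2 * A) = \<mu> * sqrt (A + B)" for A B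
    proof -
      have "sqrt (\<mu>^2 * B + \<mu>^2 * A) = sqrt (\<mu>^2 * (A + B))"
        by (simp add: power2_eq_square algebra_simps)
      also have "\<dots> = \<mu> * sqrt (A + B)" using mu by (simp add: real_sqrt_mult)
      finally show ?thesis .
    qed
    have "dist (?F z) (?F w) = \<mu> * dist z w"
      using mu by (cases z; cases w) (simp add: bilF_eq dist_norm norm_Pair algebra_simps
          flip: scaleR_diff_right, simp add: sq norm_minus_commute)
    also have "\<dots> \<le> l * dist z w" using mu by (intro mult_right_mono) auto
    finally show "dist (?F z) (?F w) \<le> l * dist z w" .
  qed (use mu in auto)
  show ?thesis unfolding in_Fbil_def using lip zero xs ys by (auto simp: domD_def)
qed


lemma scli_seq:
  fixes Y :: "nat \<Rightarrow> 'v::real_vector"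
  assumes p1: "p \<ge> 1"
    and rec: "\<And>n. Y (n + p) = (\<Sum>j<p. al j *\<^sub>R F (Y (n + j)) + be j *\<^sub>R Y (n + j))"
    and init: "\<And>k. k < p \<Longrightarrow> z0 k = Y (p - 1 - k)"
  shows "scli_iter al be p F z0 t = Y (t + p - 1)"
proof -
  have "\<forall>i<p. scli_win al be p F z0 t i = Y (t + i)"
  proof (induction t)
    case 0
    show ?case using init p1 by (auto simp: Suc_diff_le)
  next
    case (Suc t)
    show ?case
    proof (intro allI impI)
      fix i assume i: "i < p"
      show "scli_win al be p F z0 (Suc t) i = Y (Suc t + i)"
      proof (cases "i < p - 1")
        case True
        thus ?thesis using Suc i by simp
      next
        case False
        hence ip: "i = p - 1" using i by simp
        have "scli_win al be p F z0 (Suc t) i = (\<Sum>j<p. al j *\<^sub>R F (Y (t + j)) + be j *\<^sub>R Y (t + j))"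
          using False Suc by simp
        also have "\<dots> = Y (t + p)" by (rule rec[symmetric])
        finally show ?thesis using ip p1 by simp
      qed
    qed
  qed
  thus ?thesis using p1 by (simp add: scli_iter_def)
qed

definition emb :: "real^'m::finite \<Rightarrow> complex \<Rightarrow> 'm pt" where
  "emb v w = (Re w *\<^sub>R v, Im w *\<^sub>R v)"

lemma emb_add: "emb v (w1 + w2) = emb v w1 + emb v w2"
  by (simp add: emb_def scaleR_add_left)

lemma emb_scale: "emb v (complex_of_real r * w) = r *\<^sub>R emb v w"
  by (simp add: emb_def)

lemma emb_zero: "emb v 0 = 0"
  by (simp add: emb_def zero_prod_def)

lemma emb_sum: "emb v (\<Sum>j\<in>A. f j) = (\<Sum>j\<in>A. emb v (f j))"
  by (induction A rule: infinite_finite_induct) (simp_all add: emb_zero emb_add)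

lemma F_emb:
  "bil_F (mat \<mu>) (-(\<mu> *\<^sub>R (Im ws *\<^sub>R v))) (-(\<mu> *\<^sub>R (Re ws *\<^sub>R v))) (emb v w)
     = emb v (-\<i> * complex_of_real \<mu> * (w - ws))"
  by (subst bilF_eq) (simp add: emb_def algebra_simps)

lemma seq_emb:
  fixes W :: "nat \<Rightarrow> complex" and v :: "real^'m::finite"
  assumes rec: "\<And>n. W (n + p) = (\<Sum>j<p. complex_of_real (al j) * (-\<i> * complex_of_real \<mu> * (W (n + j) - ws))
                     + complex_of_real (be j) * W (n + j))"
  shows "emb v (W (n + p)) = (\<Sum>j<p. al j *\<^sub>R bil_F (mat \<mu>) (-(\<mu> *\<^sub>R (Im ws *\<^sub>R v))) (-(\<mu> *\<^sub>R (Re ws *\<^sub>R v))) (emb v (W (n + j)))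
              + be j *\<^sub>R emb v (W (n + j)))"
proof -
  have e: "al j *\<^sub>R bil_F (mat \<mu>) (-(\<mu> *\<^sub>R (Im ws *\<^sub>R v))) (-(\<mu> *\<^sub>R (Re ws *\<^sub>R v))) (emb v (W (n + j)))
              + be j *\<^sub>R emb v (W (n + j)) = emb v (complex_of_real (al j) * (-\<i> * complex_of_real \<mu> * (W (n + j) - ws))
                     + complex_of_real (be j) * W (n + j))" for j
    by (simp only: F_emb emb_add emb_scale)
  show ?thesis by (subst rec) (simp only: e emb_sum)
qed

lemma gap_lb:
  fixes v :: "real^'m::finite"
  assumes v: "norm v = 1" and mu: "\<mu> > 0" and D: "D > 0" and Xs: "\<bar>Xs\<bar> \<le> D" and Ys: "\<bar>Ys\<bar> \<le> D"
  shows "bil_gap (mat \<mu>) (-(\<mu> *\<^sub>R (Ys *\<^sub>R v))) (-(\<mu> *\<^sub>R (Xs *\<^sub>R v))) (2*D) (X *\<^sub>R v, Y *\<^sub>R v)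
          \<ge> D * \<mu> * (\<bar>X - Xs\<bar> + \<bar>Y - Ys\<bar>)"
proof -
  have vv: "v \<bullet> v = 1" using v by (simp add: dot_square_norm)
  define g where "g y' = bil_f (mat \<mu>) (-(\<mu> *\<^sub>R (Ys *\<^sub>R v))) (-(\<mu> *\<^sub>R (Xs *\<^sub>R v))) (X *\<^sub>R v) y'" for y'
  define h where "h x' = bil_f (mat \<mu>) (-(\<mu> *\<^sub>R (Ys *\<^sub>R v))) (-(\<mu> *\<^sub>R (Xs *\<^sub>R v))) x' (Y *\<^sub>R v)" for x'
  have g: "g y' = \<mu> * (X - Xs) * (v \<bullet> y') - \<mu> * Ys * X" for y'
    by (simp add: g_def bilf_eq vv algebra_simps)
  have h: "h x' = \<mu> * (Y - Ys) * (v \<bullet> x') - \<mu> * Xs * Y" for x'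
    by (simp add: h_def bilf_eq vv inner_commute algebra_simps)
  have cs: "\<bar>v \<bullet> y'\<bar> \<le> 2 * D" if "y' \<in> cball 0 (2*D)" for y'
    using Cauchy_Schwarz_ineq2[of v y'] that v by simp
  have "bdd_above (g ` cball 0 (2*D))"
  proof (rule bdd_aboveI2)
    fix y' :: "real^'m" assume "y' \<in> cball 0 (2*D)"
    hence "\<bar>v \<bullet> y'\<bar> \<le> 2 * D" by (rule cs)
    hence "\<bar>\<mu> * (X - Xs) * (v \<bullet> y')\<bar> \<le> \<bar>\<mu> * (X - Xs)\<bar> * (2*D)"
      unfolding abs_mult[of "\<mu> * (X - Xs)"] by (intro mult_left_mono) auto
    hence "\<mu> * (X - Xs) * (v \<bullet> y') \<le> \<bar>\<mu> * (X - Xs)\<bar> * (2*D)"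
      using abs_ge_self[of "\<mu> * (X - Xs) * (v \<bullet> y')"] by linarith
    thus "g y' \<le> \<bar>\<mu> * (X - Xs)\<bar> * (2*D) + \<bar>\<mu> * Ys * X\<bar>" unfolding g by linarith
  qed
  moreover have y0: "(2 * D * sgn (X - Xs)) *\<^sub>R v \<in> cball 0 (2*D)"
    using v D by (simp add: abs_mult sgn_if)
  ultimately have G: "g ((2 * D * sgn (X - Xs)) *\<^sub>R v) \<le> (SUP y'\<in>cball 0 (2*D). g y')"
    by (intro cSUP_upper)
  have "bdd_below (h ` cball 0 (2*D))"
  proof (rule bdd_belowI2)
    fix x' :: "real^'m" assume "x' \<in> cball 0 (2*D)"
    hence "\<bar>v \<bullet> x'\<bar> \<le> 2 * D" by (rule cs)
    hence "\<bar>\<mu> * (Y - Ys) * (v \<bullet> x')\<bar> \<le> \<bar>\<mu> * (Y - Ys)\<bar> * (2*D)"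
      unfolding abs_mult[of "\<mu> * (Y - Ys)"] by (intro mult_left_mono) auto
    hence "- (\<bar>\<mu> * (Y - Ys)\<bar> * (2*D)) \<le> \<mu> * (Y - Ys) * (v \<bullet> x')"
      using abs_ge_minus_self[of "\<mu> * (Y - Ys) * (v \<bullet> x')"] by linarith
    thus "- (\<bar>\<mu> * (Y - Ys)\<bar> * (2*D)) - \<bar>\<mu> * Xs * Y\<bar> \<le> h x'" unfolding h by linarith
  qed
  moreover have x0: "(- (2 * D * sgn (Y - Ys))) *\<^sub>R v \<in> cball 0 (2*D)"
    using v D by (simp add: abs_mult sgn_if)
  ultimately have H: "(INF x'\<in>cball 0 (2*D). h x') \<le> h ((- (2 * D * sgn (Y - Ys))) *\<^sub>R v)"
    by (intro cINF_lower)
  have gv: "g ((2 * D * sgn (X - Xs)) *\<^sub>R v) = 2 * D * \<mu> * \<bar>X - Xs\<bar> - \<mu> * Ys * X"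
    unfolding g using vv by (simp add: abs_sgn[of "X - Xs"] algebra_simps)
  have hv: "h ((- (2 * D * sgn (Y - Ys))) *\<^sub>R v) = - (2 * D * \<mu> * \<bar>Y - Ys\<bar>) - \<mu> * Xs * Y"
    unfolding h using vv by (simp add: abs_sgn[of "Y - Ys"] algebra_simps)
  have e1: "\<bar>Ys * (X - Xs)\<bar> \<le> D * \<bar>X - Xs\<bar>" using Ys by (simp add: abs_mult mult_right_mono)
  have e2: "\<bar>Xs * (Y - Ys)\<bar> \<le> D * \<bar>Y - Ys\<bar>" using Xs by (simp add: abs_mult mult_right_mono)
  have "- (D * (\<bar>X - Xs\<bar> + \<bar>Y - Ys\<bar>)) \<le> - Ys * (X - Xs) + Xs * (Y - Ys)"
    using e1 e2 by (simp add: abs_le_iff distrib_left)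
  hence "\<mu> * (- (D * (\<bar>X - Xs\<bar> + \<bar>Y - Ys\<bar>))) \<le> \<mu> * (- Ys * (X - Xs) + Xs * (Y - Ys))"
    using mu by (intro mult_left_mono) auto
  hence key: "- \<mu> * Ys * X + \<mu> * Xs * Y \<ge> - (D * \<mu> * (\<bar>X - Xs\<bar> + \<bar>Y - Ys\<bar>))"
    by (simp add: algebra_simps)
  have "bil_gap (mat \<mu>) (-(\<mu> *\<^sub>R (Ys *\<^sub>R v))) (-(\<mu> *\<^sub>R (Xs *\<^sub>R v))) (2*D) (X *\<^sub>R v, Y *\<^sub>R v)
     = (SUP y'\<in>cball 0 (2*D). g y') - (INF x'\<in>cball 0 (2*D). h x')"
    by (simp add: bil_gap_def g_def h_def)
  also have "\<dots> \<ge> g ((2 * D * sgn (X - Xs)) *\<^sub>R v) - h ((- (2 * D * sgn (Y - Ys))) *\<^sub>R v)"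
    using G H by linarith
  finally show ?thesis unfolding gv hv using key by (simp add: algebra_simps)
qed



lemma mk_inst:
  fixes W :: "nat \<Rightarrow> complex" and v :: "real^'m::finite"
  assumes p1: "p \<ge> 1" and D: "D > 0" and mu: "0 < \<mu>" "\<mu> \<le> l" and v: "norm v = 1"
    and wsR: "\<bar>Re ws\<bar> \<le> D" and wsI: "\<bar>Im ws\<bar> \<le> D"
    and rec: "\<And>n. W (n + p) = (\<Sum>j<p. complex_of_real (al j) * (-\<i> * complex_of_real \<mu> * (W (n + j) - ws))
                     + complex_of_real (be j) * W (n + j))"
    and init: "\<And>j. j < p \<Longrightarrow> cmod (W j) \<le> D"
    and gapW: "G \<le> D * \<mu> * cmod (W (T + p - 1) - ws)"
  shows "\<exists>(M::real^'m^'m) b1 b2 F z0 T'. in_Fbil l D M b1 b2 F \<and> (\<forall>k<p. z0 k \<in> domD D) \<and>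
           T' \<in> {T..T + p - 1} \<and> bil_gap M b1 b2 (2 * D) (scli_iter al be p F z0 T') \<ge> G"
proof -
  define b1 where "b1 = -(\<mu> *\<^sub>R (Im ws *\<^sub>R v))"
  define b2 where "b2 = -(\<mu> *\<^sub>R (Re ws *\<^sub>R v))"
  define F where "F = bil_F (mat \<mu>) b1 b2"
  define z0 where "z0 k = emb v (W (p - 1 - k))" for k
  have inF: "in_Fbil l D (mat \<mu>) b1 b2 F"
    unfolding F_def b1_def b2_def by (rule in_Fbil_I) (use mu v wsR wsI in auto)
  have dom: "z0 k \<in> domD D" if "k < p" for k
  proof -
    have c: "cmod (W (p - 1 - k)) \<le> D" using init[of "p - 1 - k"] that by simp
    have "\<bar>Re (W (p - 1 - k))\<bar> \<le> D" "\<bar>Im (W (p - 1 - k))\<bar> \<le> D"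
      using c abs_Re_le_cmod[of "W (p - 1 - k)"] abs_Im_le_cmod[of "W (p - 1 - k)"] by linarith+
    thus ?thesis by (simp add: z0_def emb_def domD_def v)
  qed
  have it: "scli_iter al be p F z0 T = emb v (W (T + p - 1))"
  proof (rule scli_seq[OF p1])
    show "emb v (W (n + p)) = (\<Sum>j<p. al j *\<^sub>R F (emb v (W (n + j))) + be j *\<^sub>R emb v (W (n + j)))" for n
      unfolding F_def b1_def b2_def by (rule seq_emb[OF rec])
    show "z0 k = emb v (W (p - 1 - k))" if "k < p" for k by (simp add: z0_def)
  qed
  have "D * \<mu> * cmod (W (T + p - 1) - ws) \<le> D * \<mu> * (\<bar>Re (W (T + p - 1)) - Re ws\<bar> + \<bar>Im (W (T + p - 1)) - Im ws\<bar>)"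
    using cmod_le[of "W (T + p - 1) - ws"] mu D by (intro mult_left_mono) auto
  also have "\<dots> \<le> bil_gap (mat \<mu>) b1 b2 (2 * D) (scli_iter al be p F z0 T)"
    unfolding it emb_def b1_def b2_def by (rule gap_lb) (use v mu D wsR wsI in auto)
  finally have "G \<le> bil_gap (mat \<mu>) b1 b2 (2 * D) (scli_iter al be p F z0 T)" using gapW by linarith
  moreover have "T \<in> {T..T + p - 1}" using p1 by simp
  ultimately show ?thesis using inF dom by blast
qed



lemma const_case:
  fixes al be :: "nat \<Rightarrow> real" and l D s a :: real
  assumes l: "l > 0" and D: "D > 0" and s: "s \<noteq> 1" and sdef: "s = (\<Sum>j<p. be j)" and adef: "a = (\<Sum>j<p. al j)"
  obtains w ws where "w = (\<Sum>j<p. complex_of_real (al j) * (-\<i> * complex_of_real l * (w - ws)) + complex_of_real (be j) * w)"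
    "cmod w \<le> D" "ws = complex_of_real D" "cmod (w - ws) > 0"
proof -
  define den where "den = complex_of_real (1 - s) + \<i> * complex_of_real (l * a)"
  have den0: "den \<noteq> 0" using s by (auto simp: den_def complex_eq_iff)
  define ws where "ws = complex_of_real D"
  define w where "w = \<i> * complex_of_real (l * a) * ws / den"
  have weq: "w * den = \<i> * complex_of_real (l*a) * ws" using den0 by (simp add: w_def)
  have sm: "(\<Sum>j<p. complex_of_real (al j) * (-\<i> * complex_of_real l * (w - ws)) + complex_of_real (be j) * w)
      = complex_of_real a * (-\<i> * complex_of_real l * (w - ws)) + complex_of_real s * w"
    by (simp add: sum.distrib sum_subtractf sum_distrib_right adef sdef)
  have rec: "w = (\<Sum>j<p. complex_of_real (al j) * (-\<i> * complex_of_real l * (w - ws)) + complex_of_real (be j) * w)"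
    unfolding sm using weq by (simp add: den_def algebra_simps)
  have wne: "w \<noteq> ws"
  proof
    assume "w = ws"
    hence "ws * den = ws * (\<i> * complex_of_real (l*a))" using weq by (simp add: mult_ac)
    hence "den = \<i> * complex_of_real (l*a)" using D by (simp add: ws_def)
    thus False using s by (simp add: den_def complex_eq_iff)
  qed
  have wD: "cmod w \<le> D"
  proof (cases "l * a = 0")
    case True
    hence "w = 0" unfolding w_def by (simp del: of_real_mult add: of_real_mult[symmetric])
    thus ?thesis using D by simp
  next
    case False
    have "\<bar>l * a\<bar> \<le> cmod den" using abs_Im_le_cmod[of den] by (simp add: den_def)
    hence pos: "cmod den > 0" using den0 by simp
    have "cmod w = \<bar>l * a\<bar> * D / cmod den" using D by (simp add: w_def ws_def norm_divide norm_mult abs_mult)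
    also have "\<dots> \<le> cmod den * D / cmod den"
      using \<open>\<bar>l * a\<bar> \<le> cmod den\<close> D pos by (intro divide_right_mono mult_right_mono) auto
    also have "\<dots> = D" using pos by simp
    finally show ?thesis .
  qed
  show ?thesis using that[OF rec wD ws_def] wne by simp
qed


theorem theorem7:
  fixes l D :: real and p :: nat and al be :: "nat \<Rightarrow> real"
  assumes "l > 0" and "D > 0" and "p \<ge> 1"
  shows "\<exists>c TA. c > 0 \<and> TA > 0 \<and>
    (\<forall>T::nat. real T \<ge> TA \<longrightarrow>
      (\<exists>(M::real^'m::finite^'m) b1 b2 F z0 T'.
         in_Fbil l D M b1 b2 F \<and>
         (\<forall>k<p. z0 k \<in> domD D) \<and>
         T' \<in> {T..T + p - 1} \<and>
         bil_gap M b1 b2 (2 * D) (scli_iter al be p F z0 T') \<ge> c * l * D\<^sup>2 / sqrt (real T)))"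
proof -
  note l = assms(1) and D = assms(2) and p1 = assms(3)
  define s where "s = (\<Sum>j<p. be j)"
  define a where "a = (\<Sum>j<p. al j)"
  define v :: "real^'m" where "v = axis undefined 1"
  have v: "norm v = 1" by (simp add: v_def)
  show ?thesis
  proof (cases "s = 1")
    case False
    obtain w ws where rec: "w = (\<Sum>j<p. complex_of_real (al j) * (-\<i> * complex_of_real l * (w - ws)) + complex_of_real (be j) * w)"
      and wD: "cmod w \<le> D" and ws: "ws = complex_of_real D" and G0: "cmod (w - ws) > 0"
      by (rule const_case[OF l D False s_def a_def])
    define c where "c = cmod (w - ws) / D"
    have "\<forall>T::nat. real T \<ge> 1 \<longrightarrow>
      (\<exists>(M::real^'m::finite^'m) b1 b2 F z0 T'.
         in_Fbil l D M b1 b2 F \<and> (\<forall>k<p. z0 k \<in> domD D) \<and> T' \<in> {T..T + p - 1} \<and>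
         bil_gap M b1 b2 (2 * D) (scli_iter al be p F z0 T') \<ge> c * l * D\<^sup>2 / sqrt (real T))"
    proof (intro allI impI)
      fix T :: nat assume T: "real T \<ge> 1"
      have sq: "sqrt (real T) \<ge> 1" using T by simp
      have "c * l * D\<^sup>2 / sqrt (real T) \<le> c * l * D\<^sup>2 / 1"
        using sq G0 D l by (intro divide_left_mono) (auto simp: c_def)
      hence "c * l * D\<^sup>2 / sqrt (real T) \<le> c * l * D\<^sup>2" by simp
      also have "\<dots> = D * l * cmod (w - ws)" using D by (simp add: c_def power2_eq_square)
      finally have gp: "c * l * D\<^sup>2 / sqrt (real T) \<le> D * l * cmod ((\<lambda>_. w) (T + p - 1) - ws)" by simp
      show "\<exists>(M::real^'m::finite^'m) b1 b2 F z0 T'.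
         in_Fbil l D M b1 b2 F \<and> (\<forall>k<p. z0 k \<in> domD D) \<and> T' \<in> {T..T + p - 1} \<and>
         bil_gap M b1 b2 (2 * D) (scli_iter al be p F z0 T') \<ge> c * l * D\<^sup>2 / sqrt (real T)"
        by (rule mk_inst[OF p1 D l order_refl v, where W="\<lambda>_. w" and ws=ws])
           (use D ws rec wD gp in auto)
    qed
    moreover have "c > 0" using G0 D by (simp add: c_def)
    ultimately show ?thesis by (intro exI[of _ c] exI[of _ "1::real"]) auto
  next
    case True
    obtain C \<mu>0 where C: "C > 0" and mu0: "\<mu>0 > 0" and H: "\<And>\<mu>. 0 < \<mu> \<Longrightarrow> \<mu> \<le> \<mu>0 \<Longrightarrow>
           (\<exists>z. poly (cP al be p \<mu>) z = 0 \<and> 1 - C * \<mu>^2 \<le> cmod z ^ 2)"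
      using hard[OF p1 True[unfolded s_def], of al] by blast
    define \<mu>1 where "\<mu>1 = min \<mu>0 (min l (1 / (4 * C + 1)))"
    have mu1: "\<mu>1 > 0" "\<mu>1 \<le> \<mu>0" "\<mu>1 \<le> l" "\<mu>1 \<le> 1 / (4 * C + 1)"
      using mu0 l C by (auto simp: \<mu>1_def)
    have Cmu1: "C * \<mu>1^2 \<le> 1/4"
    proof -
      have le1: "\<mu>1 \<le> 1" using mu1(4) C by (smt (verit) divide_le_eq_1)
      have "\<mu>1^2 \<le> \<mu>1" using mu1(1) le1 by (simp add: power2_eq_square mult_le_cancel_left1)
      hence "C * \<mu>1^2 \<le> C * (1 / (4 * C + 1))" using mu1(4) C by (intro mult_left_mono) auto
      also have "\<dots> \<le> 1/4" using C by (simp add: field_simps)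
      finally show ?thesis .
    qed
    define c where "c = \<mu>1 / (2 * l)"
    have "\<forall>T::nat. real T \<ge> real p \<longrightarrow>
      (\<exists>(M::real^'m::finite^'m) b1 b2 F z0 T'.
         in_Fbil l D M b1 b2 F \<and> (\<forall>k<p. z0 k \<in> domD D) \<and> T' \<in> {T..T + p - 1} \<and>
         bil_gap M b1 b2 (2 * D) (scli_iter al be p F z0 T') \<ge> c * l * D\<^sup>2 / sqrt (real T))"
    proof (intro allI impI)
      fix T :: nat assume T: "real T \<ge> real p"
      hence Tp: "p \<le> T" by simp
      have T1: "real T \<ge> 1" using T p1 by simp
      have sq: "sqrt (real T) \<ge> 1" using T1 by simp
      define \<mu> where "\<mu> = \<mu>1 / sqrt (real T)"
      have mu: "0 < \<mu>" "\<mu> \<le> \<mu>1" using mu1 sq by (auto simp: \<mu>_def divide_le_eq)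
      obtain z where z: "poly (cP al be p \<mu>) z = 0" and zb: "1 - C * \<mu>^2 \<le> cmod z ^ 2"
        using H[OF mu(1)] mu(2) mu1(2) by auto
      have Cmu: "C * \<mu>^2 \<le> 1 / (4 * real T)"
      proof -
        have "C * \<mu>^2 = C * \<mu>1^2 / real T" using T1 by (simp add: \<mu>_def power_divide)
        also have "\<dots> \<le> (1/4) / real T" using Cmu1 T1 by (intro divide_right_mono) auto
        finally show ?thesis by simp
      qed
      define m where "m = max 1 (cmod z)"
      have m1: "m \<ge> 1" by (simp add: m_def)
      define \<eta> where "\<eta> = 1 / m ^ (p - 1)"
      have eta: "\<eta> > 0" using m1 by (simp add: \<eta>_def)
      define W where "W n = complex_of_real (D * \<eta>) * z ^ n" for n
      have zp: "z ^ p = (\<Sum>j<p. cc al be \<mu> j * z ^ j)" using z by (simp add: poly_cP)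
      have rec: "W (n + p) = (\<Sum>j<p. complex_of_real (al j) * (-\<i> * complex_of_real \<mu> * (W (n + j) - 0))
                     + complex_of_real (be j) * W (n + j))" for n
      proof -
        have "W (n + p) = complex_of_real (D * \<eta>) * z ^ n * z ^ p" by (simp add: W_def power_add mult_ac)
        also have "\<dots> = (\<Sum>j<p. complex_of_real (D * \<eta>) * z ^ n * (cc al be \<mu> j * z ^ j))"
          by (simp add: zp sum_distrib_left)
        also have "\<dots> = (\<Sum>j<p. complex_of_real (al j) * (-\<i> * complex_of_real \<mu> * (W (n + j) - 0))
                     + complex_of_real (be j) * W (n + j))"
          by (intro sum.cong refl) (simp add: cc_def W_def power_add algebra_simps)
        finally show ?thesis .
      qed
      have init: "cmod (W j) \<le> D" if "j < p" for j
      proof -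
        have "cmod z ^ j \<le> m ^ j" by (intro power_mono) (auto simp: m_def)
        also have "\<dots> \<le> m ^ (p - 1)" using m1 that by (intro power_increasing) auto
        finally have "\<eta> * cmod z ^ j \<le> 1" using m1 by (simp add: \<eta>_def field_simps)
        hence "D * (\<eta> * cmod z ^ j) \<le> D * 1" using D by (intro mult_left_mono) auto
        thus ?thesis using D eta by (simp add: W_def norm_mult norm_power abs_of_pos mult_ac)
      qed
      define N where "N = T + p - 1"
      have half: "\<eta> * cmod z ^ N \<ge> 1/2"
      proof (cases "cmod z \<ge> 1")
        case True
        hence "m = cmod z" by (simp add: m_def)
        have NN: "N = T + (p - 1)" using p1 by (simp add: N_def)
        have nz: "cmod z ^ (p - 1) \<noteq> 0" using True by (auto simp: power_eq_0_iff)
        have "\<eta> * cmod z ^ N = cmod z ^ T * cmod z ^ (p - 1) / cmod z ^ (p - 1)"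
          using \<open>m = cmod z\<close> by (simp add: \<eta>_def NN power_add)
        also have "\<dots> = cmod z ^ T" using nz by simp
        finally have "\<eta> * cmod z ^ N = cmod z ^ T" .
        also have "\<dots> \<ge> 1" using True by (simp add: one_le_power)
        finally show ?thesis by simp
      next
        case False
        hence "m = 1" by (simp add: m_def)
        hence e1: "\<eta> = 1" by (simp add: \<eta>_def)
        have x0: "-1 \<le> - (1 / (4 * real T))" using T1 by (simp add: field_simps)
        have "1 + real N * (- (1 / (4 * real T))) \<le> (1 + - (1 / (4 * real T))) ^ N"
          by (rule Bernoulli_inequality[OF x0])
        also have "\<dots> \<le> (cmod z ^ 2) ^ N"
        proof (rule power_mono)
          show "1 + - (1 / (4 * real T)) \<le> cmod z ^ 2" using zb Cmu by linarith
          have "1 / (4 * real T) \<le> 1" using T1 by (simp add: field_simps)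
          thus "0 \<le> 1 + - (1 / (4 * real T))" by linarith
        qed
        finally have b: "1 - real N / (4 * real T) \<le> (cmod z ^ N) ^ 2"
          by (simp add: power_mult[symmetric] mult.commute)
        have "real N \<le> 2 * real T" using Tp p1 by (simp add: N_def)
        hence "real N / (4 * real T) \<le> 1/2" using T1 by (simp add: field_simps)
        hence sq2: "1/4 < (cmod z ^ N) ^ 2" using b by linarith
        have "1/2 \<le> cmod z ^ N"
        proof (rule ccontr)
          assume "\<not> 1/2 \<le> cmod z ^ N"
          hence "(cmod z ^ N) ^ 2 \<le> (1/2)^2" by (intro power_mono) auto
          thus False using sq2 by (simp add: power2_eq_square)
        qed
        thus ?thesis using e1 by simp
      qed
      have gp: "c * l * D\<^sup>2 / sqrt (real T) \<le> D * \<mu> * cmod (W (T + p - 1) - 0)"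
      proof -
        have "c * l * D\<^sup>2 / sqrt (real T) = D * \<mu> * (D * (1/2))"
          using l by (simp add: c_def \<mu>_def power2_eq_square field_simps)
        also have "\<dots> \<le> D * \<mu> * (D * (\<eta> * cmod z ^ N))"
          using half D mu by (intro mult_left_mono) auto
        also have "\<dots> = D * \<mu> * cmod (W (T + p - 1) - 0)"
          using D eta by (simp add: W_def N_def norm_mult norm_power abs_of_pos mult_ac)
        finally show ?thesis .
      qed
      show "\<exists>(M::real^'m::finite^'m) b1 b2 F z0 T'.
         in_Fbil l D M b1 b2 F \<and> (\<forall>k<p. z0 k \<in> domD D) \<and> T' \<in> {T..T + p - 1} \<and>
         bil_gap M b1 b2 (2 * D) (scli_iter al be p F z0 T') \<ge> c * l * D\<^sup>2 / sqrt (real T)"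
        by (rule mk_inst[OF p1 D mu(1) _ v, where W=W and ws=0])
           (use D rec init gp mu mu1 in auto)
    qed
    moreover have "c > 0" using mu1 l by (simp add: c_def)
    moreover have "real p > 0" using p1 by simp
    ultimately show ?thesis by (intro exI[of _ c] exI[of _ "real p"]) auto
  qed
qed


end
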